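(* Let $f_0,g_1,\dots,g_q:\mathbb{R}^n\to\mathbb{R}$ with $f_0$ continuous and each $g_i$ lower semicontinuous. For $\nu\in\mathbb{N}$ let $f_0^\nu,g_1^\nu,\dots,g_q^\nu:\mathbb{R}^n\to\mathbb{R}$ and $\alpha^\nu\ge0$ satisfy $\sup_{x\in\mathbb{R}^n}|f_0^\nu(x)-f_0(x)|\le\alpha^\nu$ and $\sup_{x\in\mathbb{R}^n}\max_{i=1,\dots,q}|g_i^\nu(x)-g_i(x)|\le\alpha^\nu$, and let $\theta^\nu>0$. Define $f,f^\nu:\mathbb{R}^n\times\mathbb{R}^q\to(-\infty,\infty]$ by $$f(x,y)=f_0(x)+\sum_{i=1}^q\iota_{\{0\}}(y_i)+\sum_{i=1}^q\iota_{(-\infty,0]}\big(g_i(x)-y_i\big),$$ $$f^\nu(x,y)=f_0^\nu(x)+\sum_{i=1}^q\phi^\nu(y_i)+\sum_{i=1}^q\iota_{(-\infty,0]}\big(g_i^\nu(x)-y_i\big),\quad \phi^\nu(\beta)=\theta^\nu\beta \text{ if }\beta\ge0,\ \phi^\nu(\beta)=\infty\text{ otherwise}.$$ If $\theta^\nu\to\infty$ and $\theta^\nu\alpha^\nu\to0$, then $f^\nu$ epi-converges to $f$.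
   Context: For a set $C$, $\iota_C(u)=0$ if $u\in C$ and $\iota_C(u)=\infty$ otherwise. A sequence $f^\nu$ epi-converges to $f$ if the epigraphs $\{(z,\alpha)\mid f^\nu(z)\le\alpha\}$ set-converge in the Painlevé–Kuratowski sense to $\{(z,\alpha)\mid f(z)\le\alpha\}$; equivalently, (i) for every $z^\nu\to z$, $\liminf f^\nu(z^\nu)\ge f(z)$, and (ii) for every $z$ there exists $z^\nu\to z$ with $\limsup f^\nu(z^\nu)\le f(z)$. *)

theory Defs
  imports "HOL-Analysis.Analysis"
begin

definition lsc :: "('a::topological_space \<Rightarrow> real) \<Rightarrow> bool" where
  "lsc g \<longleftrightarrow> (\<forall>x. \<forall>c. c < g x \<longrightarrow> (\<forall>\<^sub>F y in nhds x. c < g y))"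

definition iota :: "'a set \<Rightarrow> 'a \<Rightarrow> ereal" where
  "iota C u = (if u \<in> C then 0 else \<infinity>)"

definition epigraph :: "('a \<Rightarrow> ereal) \<Rightarrow> ('a \<times> real) set" where
  "epigraph f = {(z, a). f z \<le> ereal a}"

definition inner_limit :: "(nat \<Rightarrow> 'a::topological_space set) \<Rightarrow> 'a set" where
  "inner_limit C = {z. \<exists>zs. (zs \<longlongrightarrow> z) sequentially \<and> (\<forall>\<^sub>F k in sequentially. zs k \<in> C k)}"

definition outer_limit :: "(nat \<Rightarrow> 'a::topological_space set) \<Rightarrow> 'a set" where
  "outer_limit C = {z. \<exists>r zs. strict_mono r \<and> (zs \<longlongrightarrow> z) sequentially \<and> (\<forall>k. zs k \<in> C (r k))}"

definition set_converges :: "(nat \<Rightarrow> 'a::topological_space set) \<Rightarrow> 'a set \<Rightarrow> bool" where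
  "set_converges C D \<longleftrightarrow> inner_limit C = D \<and> outer_limit C = D"

definition epi_converges :: "(nat \<Rightarrow> 'a::topological_space \<Rightarrow> ereal) \<Rightarrow> ('a \<Rightarrow> ereal) \<Rightarrow> bool" where
  "epi_converges fs f \<longleftrightarrow> set_converges (\<lambda>k. epigraph (fs k)) (epigraph f)"

definition phi :: "real \<Rightarrow> real \<Rightarrow> ereal" where
  "phi \<theta> b = (if b \<ge> 0 then ereal (\<theta> * b) else \<infinity>)"

end

theory Submission
  imports Defs
begin

lemma char_fs:
  fixes y :: "real^'q::finite" and G :: "'q \<Rightarrow> real"
  assumes t0: "t \<ge> 0"
  shows "ereal c + (\<Sum>i\<in>UNIV. phi t (y $ i)) + (\<Sum>i\<in>UNIV. iota {..0} (G i - y $ i))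
     = (if (\<forall>i. 0 \<le> y $ i \<and> G i \<le> y $ i) then ereal (c + t * sum (\<lambda>i. y $ i) UNIV) else \<infinity>)"
proof (cases "\<forall>i. 0 \<le> y $ i \<and> G i \<le> y $ i")
  case True
  have 1: "(\<Sum>i\<in>UNIV. phi t (y $ i)) = ereal (t * sum (\<lambda>i. y $ i) UNIV)"
    using True by (simp add: phi_def sum_ereal sum_distrib_left)
  have 2: "(\<Sum>i\<in>UNIV. iota {..0} (G i - y $ i)) = 0"
    using True by (simp add: iota_def)
  show ?thesis using True 1 2 by simp
next
  case False
  then obtain i where i: "\<not> (0 \<le> y $ i \<and> G i \<le> y $ i)" by blast
  have A: "(\<Sum>i\<in>UNIV. phi t (y $ i)) = \<infinity> \<or> (\<Sum>i\<in>UNIV. iota {..0} (G i - y $ i)) = \<infinity>"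
    using i by (auto simp: sum_Pinfty phi_def iota_def)
  have B: "(\<Sum>i\<in>UNIV. phi t (y $ i)) \<ge> 0"
    by (rule sum_nonneg) (simp add: phi_def t0)
  have C: "(\<Sum>i\<in>UNIV. iota {..0} (G i - y $ i)) \<ge> 0"
    by (rule sum_nonneg) (simp add: iota_def)
  show ?thesis using False A B C by auto
qed

lemma char_f:
  fixes y :: "real^'q::finite" and G :: "'q \<Rightarrow> real"
  shows "ereal c + (\<Sum>i\<in>UNIV. iota {0} (y $ i)) + (\<Sum>i\<in>UNIV. iota {..0} (G i - y $ i))
     = (if y = 0 \<and> (\<forall>i. G i \<le> 0) then ereal c else \<infinity>)"
proof (cases "y = 0 \<and> (\<forall>i. G i \<le> 0)")
  case True
  then show ?thesis by (simp add: iota_def)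
next
  case False
  then have A: "(\<Sum>i\<in>UNIV. iota {0} (y $ i)) = \<infinity> \<or> (\<Sum>i\<in>UNIV. iota {..0} (G i - y $ i)) = \<infinity>"
    by (auto simp: sum_Pinfty iota_def vec_eq_iff)
  have B: "(\<Sum>i\<in>UNIV. iota {0} (y $ i)) \<ge> 0" "(\<Sum>i\<in>UNIV. iota {..0} (G i - y $ i)) \<ge> 0"
    by (rule sum_nonneg, simp add: iota_def)+
  show ?thesis using False A B by auto
qed

lemma inner_sub_outer: "inner_limit C \<subseteq> outer_limit C"
proof
  fix z assume "z \<in> inner_limit C"
  then obtain zs where zs: "zs \<longlonglongrightarrow> z" "\<forall>\<^sub>F k in sequentially. zs k \<in> C k"
    unfolding inner_limit_def by blast
  then obtain N where N: "\<And>k. k \<ge> N \<Longrightarrow> zs k \<in> C k" by (auto simp: eventually_sequentially)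
  have "strict_mono (\<lambda>k. k + N)" by (simp add: strict_mono_def)
  moreover have "(\<lambda>k. zs (k + N)) \<longlonglongrightarrow> z" using zs(1) by (rule LIMSEQ_ignore_initial_segment)
  moreover have "\<forall>k. zs (k + N) \<in> C (k + N)" using N by simp
  ultimately show "z \<in> outer_limit C" unfolding outer_limit_def by blast
qed

theorem mainTheorem5:
  fixes f0 :: "real^'n \<Rightarrow> real"
    and g :: "'q::finite \<Rightarrow> real^'n \<Rightarrow> real"
    and f0s :: "nat \<Rightarrow> real^'n \<Rightarrow> real"
    and gs :: "nat \<Rightarrow> 'q \<Rightarrow> real^'n \<Rightarrow> real"
    and \<alpha> \<theta> :: "nat \<Rightarrow> real"
    and f :: "(real^'n) \<times> (real^'q) \<Rightarrow> ereal"
    and fs :: "nat \<Rightarrow> (real^'n) \<times> (real^'q) \<Rightarrow> ereal"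
  assumes f0_cont: "continuous_on UNIV f0"
    and g_lsc: "\<And>i. lsc (g i)"
    and alpha_nonneg: "\<And>k. \<alpha> k \<ge> 0"
    and f0_approx: "\<And>k x. \<bar>f0s k x - f0 x\<bar> \<le> \<alpha> k"
    and g_approx: "\<And>k i x. \<bar>gs k i x - g i x\<bar> \<le> \<alpha> k"
    and theta_pos: "\<And>k. \<theta> k > 0"
    and f_def: "\<And>x y. f (x, y) = ereal (f0 x) + (\<Sum>i\<in>UNIV. iota {0} (y $ i))
                         + (\<Sum>i\<in>UNIV. iota {..0} (g i x - y $ i))"
    and fs_def: "\<And>k x y. fs k (x, y) = ereal (f0s k x) + (\<Sum>i\<in>UNIV. phi (\<theta> k) (y $ i))
                         + (\<Sum>i\<in>UNIV. iota {..0} (gs k i x - y $ i))"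
    and theta_lim: "filterlim \<theta> at_top sequentially"
    and theta_alpha_lim: "(\<lambda>k. \<theta> k * \<alpha> k) \<longlonglongrightarrow> 0"
  shows "epi_converges fs f"
proof -
  have fs_char: "\<And>k x y a. ((x, y), a) \<in> epigraph (fs k) \<longleftrightarrow>
      (\<forall>i. 0 \<le> y $ i \<and> gs k i x \<le> y $ i) \<and> f0s k x + \<theta> k * sum (\<lambda>i. y $ i) UNIV \<le> a"
    unfolding epigraph_def using theta_pos
    by (simp add: fs_def char_fs[where t="\<theta> _"] less_imp_le)
  have f_char: "\<And>x y a. ((x, y), a) \<in> epigraph f \<longleftrightarrow>
      y = 0 \<and> (\<forall>i. g i x \<le> 0) \<and> f0 x \<le> a"
    unfolding epigraph_def by (simp add: f_def char_f)
  have th_inf: "filterlim \<theta> at_infinity sequentially"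
    using theta_lim by (rule filterlim_at_top_imp_at_infinity)
  have alim: "\<alpha> \<longlonglongrightarrow> 0"
  proof -
    have "(\<lambda>k. \<theta> k * \<alpha> k / \<theta> k) \<longlonglongrightarrow> 0"
      using theta_alpha_lim th_inf by (rule tendsto_divide_0)
    moreover have "(\<lambda>k. \<theta> k * \<alpha> k / \<theta> k) = \<alpha>" using theta_pos
      by (auto simp: fun_eq_iff less_imp_neq[symmetric])
    ultimately show ?thesis by simp
  qed
  have A: "epigraph f \<subseteq> inner_limit (\<lambda>k. epigraph (fs k))"
  proof
    fix z assume "z \<in> epigraph f"
    then obtain x y a where z: "z = ((x, y), a)" and y0: "y = 0" and gx: "\<And>i. g i x \<le> 0"
      and fa: "f0 x \<le> a"
      by (metis f_char prod.collapse)
    define zs where "zs = (\<lambda>k. ((x, (\<chi> i. \<alpha> k)::real^'q),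
                        a + \<alpha> k + real CARD('q) * (\<theta> k * \<alpha> k)))"
    have "zs \<longlonglongrightarrow> z"
    proof -
      have "(\<lambda>k. (\<chi> i. \<alpha> k)::real^'q) \<longlonglongrightarrow> (\<chi> i. 0)"
        by (rule tendsto_vec_lambda) (rule alim)
      moreover have "(\<chi> i. 0) = (0::real^'q)" by (simp add: vec_eq_iff)
      moreover have "(\<lambda>k. a + \<alpha> k + real CARD('q) * (\<theta> k * \<alpha> k)) \<longlonglongrightarrow> a + 0 + real CARD('q) * 0"
        by (intro tendsto_intros alim theta_alpha_lim)
      ultimately show ?thesis unfolding zs_def z y0
        by (auto intro!: tendsto_Pair)
    qed
    moreover have "\<forall>k. zs k \<in> epigraph (fs k)"
    proof
      fix k
      have "\<forall>i. 0 \<le> \<alpha> k \<and> gs k i x \<le> \<alpha> k"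
        using alpha_nonneg g_approx[of k _ x] gx by (smt (verit))
      moreover have "f0s k x + \<theta> k * (real CARD('q) * \<alpha> k) \<le> a + \<alpha> k + real CARD('q) * (\<theta> k * \<alpha> k)"
        using f0_approx[of k x] fa by (smt (verit) mult.left_commute)
      ultimately show "zs k \<in> epigraph (fs k)" unfolding zs_def fs_char
        by simp
    qed
    ultimately show "z \<in> inner_limit (\<lambda>k. epigraph (fs k))"
      unfolding inner_limit_def by auto
  qed
  have B: "outer_limit (\<lambda>k. epigraph (fs k)) \<subseteq> epigraph f"
  proof
    fix z assume "z \<in> outer_limit (\<lambda>k. epigraph (fs k))"
    then obtain r zs where r: "strict_mono r" and zs: "zs \<longlonglongrightarrow> z"
      and mem: "\<And>k. zs k \<in> epigraph (fs (r k))"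
      unfolding outer_limit_def by blast
    obtain x y a where z: "z = ((x, y), a)" by (metis prod.collapse)
    define xk where "xk = (\<lambda>k. fst (fst (zs k)))"
    define yk where "yk = (\<lambda>k. snd (fst (zs k)))"
    define ak where "ak = (\<lambda>k. snd (zs k))"
    have zk: "zs k = ((xk k, yk k), ak k)" for k by (simp add: xk_def yk_def ak_def)
    have xl: "xk \<longlonglongrightarrow> x" unfolding xk_def using tendsto_fst[OF tendsto_fst[OF zs]] z
      by simp
    have yl: "yk \<longlonglongrightarrow> y" unfolding yk_def using tendsto_snd[OF tendsto_fst[OF zs]] z
      by simp
    have al: "ak \<longlonglongrightarrow> a" unfolding ak_def using tendsto_snd[OF zs] z
      by simp
    have m: "\<And>k i. 0 \<le> yk k $ i" "\<And>k i. gs (r k) i (xk k) \<le> yk k $ i"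
      "\<And>k. f0s (r k) (xk k) + \<theta> (r k) * sum (\<lambda>i. yk k $ i) UNIV \<le> ak k"
      using mem unfolding zk fs_char by auto
    have ar: "(\<lambda>k. \<alpha> (r k)) \<longlonglongrightarrow> 0"
      using LIMSEQ_subseq_LIMSEQ[OF alim r] by (simp add: o_def)
    have thr: "filterlim (\<lambda>k. \<theta> (r k)) at_infinity sequentially"
      using filterlim_compose[OF th_inf filterlim_subseq[OF r]] by (simp add: o_def)
    have f0x: "(\<lambda>k. f0 (xk k)) \<longlonglongrightarrow> f0 x"
      using f0_cont xl by (metis continuous_on_tendsto_compose UNIV_I eventually_sequentially)
    have f0sl: "(\<lambda>k. f0s (r k) (xk k)) \<longlonglongrightarrow> f0 x"
    proof -
      have "(\<lambda>k. f0s (r k) (xk k) - f0 (xk k)) \<longlonglongrightarrow> 0"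
      proof (rule tendsto_sandwich[of "\<lambda>k. - \<alpha> (r k)" _ _ "\<lambda>k. \<alpha> (r k)"])
        show "\<forall>\<^sub>F n in sequentially. - \<alpha> (r n) \<le> f0s (r n) (xk n) - f0 (xk n)"
          using f0_approx by (intro always_eventually allI) (smt (verit))
        show "\<forall>\<^sub>F n in sequentially. f0s (r n) (xk n) - f0 (xk n) \<le> \<alpha> (r n)"
          using f0_approx by (intro always_eventually allI) (smt (verit))
        show "(\<lambda>k. - \<alpha> (r k)) \<longlonglongrightarrow> 0" using tendsto_minus[OF ar] by simp
        show "(\<lambda>k. \<alpha> (r k)) \<longlonglongrightarrow> 0" by (rule ar)
      qed
      from tendsto_add[OF this f0x] show ?thesis by simp
    qed
    have sumnn: "\<And>k. 0 \<le> sum (\<lambda>i. yk k $ i) UNIV" using m(1) by (simp add: sum_nonneg)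
    have fa: "f0 x \<le> a"
    proof (rule LIMSEQ_le[OF f0sl al])
      show "\<exists>N. \<forall>n\<ge>N. f0s (r n) (xk n) \<le> ak n"
        using m(3) sumnn theta_pos by (smt (verit) mult_nonneg_nonneg)
    qed
    have yi0: "\<And>i. (\<lambda>k. yk k $ i) \<longlonglongrightarrow> 0"
    proof -
      fix i
      have q: "(\<lambda>k. (ak k - f0s (r k) (xk k)) / \<theta> (r k)) \<longlonglongrightarrow> 0"
        by (rule tendsto_divide_0[OF tendsto_diff[OF al f0sl] thr])
      show "(\<lambda>k. yk k $ i) \<longlonglongrightarrow> 0"
      proof (rule tendsto_sandwich[of "\<lambda>k. 0" _ _ "\<lambda>k. (ak k - f0s (r k) (xk k)) / \<theta> (r k)"])
        show "\<forall>\<^sub>F n in sequentially. 0 \<le> yk n $ i" using m(1) by simp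
        show "\<forall>\<^sub>F n in sequentially. yk n $ i \<le> (ak n - f0s (r n) (xk n)) / \<theta> (r n)"
        proof (rule always_eventually, rule allI)
          fix n
          have h1: "yk n $ i \<le> sum (\<lambda>i. yk n $ i) UNIV"
            using m(1) by (intro member_le_sum) auto
          have h2: "\<theta> (r n) * yk n $ i \<le> \<theta> (r n) * sum (\<lambda>i. yk n $ i) UNIV"
            using theta_pos[of "r n"] h1 by (intro mult_left_mono) auto
          have "\<theta> (r n) * yk n $ i \<le> ak n - f0s (r n) (xk n)"
            using h2 m(3)[of n] by linarith
          thus "yk n $ i \<le> (ak n - f0s (r n) (xk n)) / \<theta> (r n)"
            using theta_pos[of "r n"] by (simp add: pos_le_divide_eq mult.commute)
        qed
      qed (auto intro: q)
    qed
    have y0: "y = 0"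
    proof -
      have "\<And>i. y $ i = 0"
        using LIMSEQ_unique[OF tendsto_vec_nth[OF yl] yi0] by blast
      thus ?thesis by (simp add: vec_eq_iff)
    qed
    have gx: "g i x \<le> 0" for i
    proof (rule ccontr)
      assume "\<not> g i x \<le> 0"
      hence c: "g i x / 2 < g i x" "0 < g i x / 2" by auto
      have "\<forall>\<^sub>F w in nhds x. g i x / 2 < g i w" using g_lsc[of i] c(1) unfolding lsc_def by blast
      hence e1: "\<forall>\<^sub>F k in sequentially. g i x / 2 < g i (xk k)"
        using eventually_compose_filterlim xl by blast
      have "(\<lambda>k. yk k $ i + \<alpha> (r k)) \<longlonglongrightarrow> 0 + 0" by (intro tendsto_add yi0 ar)
      hence t0: "(\<lambda>k. yk k $ i + \<alpha> (r k)) \<longlonglongrightarrow> 0" by simp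
      have e2: "\<forall>\<^sub>F k in sequentially. yk k $ i + \<alpha> (r k) < g i x / 2"
        by (rule order_tendstoD(2)[OF t0 c(2)])
      have "\<forall>\<^sub>F k in sequentially. False"
        using eventually_conj[OF e1 e2]
      proof (rule eventually_mono)
        fix k assume "g i x / 2 < g i (xk k) \<and> yk k $ i + \<alpha> (r k) < g i x / 2"
        moreover have "g i (xk k) \<le> gs (r k) i (xk k) + \<alpha> (r k)"
          using g_approx[of "r k" i "xk k"] by (simp add: abs_le_iff)
        ultimately show False using m(2)[of k i] by linarith
      qed
      thus False by simp
    qed
    show "z \<in> epigraph f" unfolding z f_char using y0 gx fa by blast
  qed
  show ?thesis unfolding epi_converges_def set_converges_def
    using A B inner_sub_outer[of "\<lambda>k. epigraph (fs k)"] by blast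
qed

end
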